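(* Let $\phi:\mathbb{R}^{d}\to\mathbb{R}^{d}$ be a $C^{2}$ diffeomorphism, $x_{1}\in\mathbb{R}^{d}$, $v_{1}\in\mathbb{R}^{d}$ with $\|v_{1}\|=1$, and $x_{j}=\phi^{j-1}(x_{1})$. If $x_{1},\ldots,x_{D-1}$ are distinct, then the $(D-1)\times D_{\alpha}$ matrix $H(x_{1},v_{1})$ (defined in the context) has rank $D-1$, i.e. rank equal to its number of rows.
   Context: $\pi_{1}$ is the first coordinate projection, $\mathbf{e}_{1}=(1,0,\ldots,0)$. For a multi-index $\alpha\in\mathbb{Z}_{\geq0}^{d}$, $p_{\alpha}(x)=\prod_i(\pi_{i}x)^{\alpha_{i}}$; $\mathcal{I}_{2D-1}$ is the set of multi-indices with $|\alpha|\leq2D-1$, of cardinality $D_{\alpha}$. For $c=(c_{\alpha})\in\mathbb{R}^{D_{\alpha}}$, $\phi_{c}(x)=\phi(x)+\mathbf{e}_{1}\sum_{\alpha\in\mathcal{I}_{2D-1}}c_{\alpha}p_{\alpha}(x)$. The matrix $H(x_{1},v_{1})$ has row $j$ ($j=1,\ldots,D-1$) equal to the gradient with respect to $c$ at $c=0$ of $c\mapsto\pi_{1}\big(D(\phi_{c}^{j})(x_{1})\,v_{1}\big)$, where $D(\phi_c^j)(x_1)$ is the Jacobian matrix of $\phi_c^j$ at $x_1$. Equivalently, writing $F_{c}(x)=(\pi_{1}x,\pi_{1}\phi_{c}(x),\ldots,\pi_{1}\phi_{c}^{D-1}(x))$, one has $dF_{c}(x_{1})v_{1}=dF_{0}(x_{1})v_{1}+\binom{0}{H(x_{1},v_{1})}c+O(\|c\|^{2})$;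 e.g. the first row is $v_{1}^{T}\nabla p_{\alpha}(x_{1})$. *)

theory Defs
  imports "HOL-Analysis.Analysis"
begin

text \<open>Coordinates of R^d are indexed by a finite, well-ordered type 'n; the first
  coordinate (pi_1, e_1) is the least index.\<close>

definition first_idx :: "'n::{finite,wellorder}" where
  "first_idx = (LEAST i. True)"

definition pi1 :: "(real, 'n::{finite,wellorder}) vec \<Rightarrow> real" where
  "pi1 x = x $ first_idx"

definition e1 :: "(real, 'n::{finite,wellorder}) vec" where
  "e1 = axis first_idx 1"

definition C2 :: "((real, 'n::finite) vec \<Rightarrow> (real, 'n) vec) \<Rightarrow> bool" where
  "C2 f \<longleftrightarrow> (\<exists>f' f''.
     (\<forall>x. (f has_derivative blinfun_apply (f' x)) (at x)) \<and>
     (\<forall>x. (f' has_derivative blinfun_apply (f'' x)) (at x)) \<and>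
     continuous_on UNIV f'')"

definition C2_diffeo :: "((real, 'n::finite) vec \<Rightarrow> (real, 'n) vec) \<Rightarrow> bool" where
  "C2_diffeo f \<longleftrightarrow> bij f \<and> C2 f \<and> C2 (inv f)"

definition multi_idx :: "nat \<Rightarrow> ('n::finite \<Rightarrow> nat) set" where
  "multi_idx D = {\<alpha>. (\<Sum>i\<in>UNIV. \<alpha> i) \<le> 2 * D - 1}"

definition mono_p :: "('n::finite \<Rightarrow> nat) \<Rightarrow> (real, 'n) vec \<Rightarrow> real" where
  "mono_p \<alpha> x = (\<Prod>i\<in>UNIV. (x $ i) ^ (\<alpha> i))"

text \<open>Perturbation phi_c; c ranges over functions on multi-indices (only the values on
  multi_idx D matter, so this is R^{D_alpha}).\<close>

definition phi_c :: "nat \<Rightarrow> ((real, 'n::{finite,wellorder}) vec \<Rightarrow> (real, 'n) vec) \<Rightarrow> (('n \<Rightarrow> nat) \<Rightarrow> real)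
    \<Rightarrow> (real, 'n) vec \<Rightarrow> (real, 'n) vec" where
  "phi_c D \<phi> c x = \<phi> x + (\<Sum>\<alpha>\<in>multi_idx D. c \<alpha> * mono_p \<alpha> x) *\<^sub>R e1"

text \<open>Entry (j, alpha) of H(x1,v1): the alpha-th component of the gradient at c = 0 of
  c |-> pi_1 (D(phi_c^j)(x1) v1), i.e. the partial derivative in c_alpha.\<close>

definition H_entry :: "nat \<Rightarrow> ((real, 'n::{finite,wellorder}) vec \<Rightarrow> (real, 'n) vec) \<Rightarrow> (real, 'n) vec \<Rightarrow> (real, 'n) vec
    \<Rightarrow> nat \<Rightarrow> ('n \<Rightarrow> nat) \<Rightarrow> real" where
  "H_entry D \<phi> x1 v1 j \<alpha> =
     deriv (\<lambda>t. pi1 (frechet_derivative (phi_c D \<phi> (\<lambda>\<beta>. if \<beta> = \<alpha> then t else 0) ^^ j)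
                        (at x1) v1)) 0"

text \<open>A matrix with rows indexed by R and columns by C has rank equal to its number of
  rows iff its rows are linearly independent.\<close>

definition full_row_rank :: "nat set \<Rightarrow> 'c set \<Rightarrow> (nat \<Rightarrow> 'c \<Rightarrow> real) \<Rightarrow> bool" where
  "full_row_rank R C M \<longleftrightarrow>
     (\<forall>a. (\<forall>\<alpha>\<in>C. (\<Sum>j\<in>R. a j * M j \<alpha>) = 0) \<longrightarrow> (\<forall>j\<in>R. a j = 0))"

end

theory Submission
  imports Defs
begin

type_synonym 'n rv = "(real, 'n) vec"

lemma finite_multi_idx: "finite (multi_idx D :: ('n::finite \<Rightarrow> nat) set)"
proof -
  have "multi_idx D \<subseteq> Pi\<^sub>E UNIV (\<lambda>_. {..2*D-1})"
    unfolding multi_idx_def PiE_UNIV_domain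
    by (auto intro: order_trans[OF member_le_sum])
  moreover have "finite (Pi\<^sub>E (UNIV::'n set) (\<lambda>_. {..2*D-1}))"
    by (rule finite_PiE) auto
  ultimately show ?thesis by (rule finite_subset)
qed

definition mono_d :: "('n::finite \<Rightarrow> nat) \<Rightarrow> 'n rv \<Rightarrow> 'n rv \<Rightarrow> real" where
  "mono_d \<alpha> y v = (\<Sum>i\<in>UNIV. (of_nat (\<alpha> i) * v $ i * (y $ i) ^ (\<alpha> i - 1)) * (\<Prod>j\<in>UNIV - {i}. (y $ j) ^ (\<alpha> j)))"

lemma has_derivative_nth': "((\<lambda>x. x $ i) has_derivative (\<lambda>v. v $ i)) F"
  by (rule bounded_linear_imp_has_derivative) (rule bounded_linear_vec_nth)

lemma mono_p_deriv: "(mono_p \<alpha> has_derivative mono_d \<alpha> y) (at y)"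
  unfolding mono_p_def[abs_def] mono_d_def
  by (rule has_derivative_prod, rule has_derivative_power, rule has_derivative_nth')

lemma mono_d_cont: "continuous_on UNIV (\<lambda>p. mono_d \<alpha> (fst p) (snd p))"
  unfolding mono_d_def by (intro continuous_intros)

inductive polyk :: "nat \<Rightarrow> ('n::finite rv \<Rightarrow> real) \<Rightarrow> bool" where
  mono: "sum \<alpha> UNIV \<le> k \<Longrightarrow> polyk k (mono_p \<alpha>)"
| zero: "polyk k (\<lambda>x. 0)"
| add: "polyk k f \<Longrightarrow> polyk k g \<Longrightarrow> polyk k (\<lambda>x. f x + g x)"
| smult: "polyk k f \<Longrightarrow> polyk k (\<lambda>x. c * f x)"

lemma polyk_mono: "polyk k f \<Longrightarrow> k \<le> k' \<Longrightarrow> polyk k' f"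
  by (induction rule: polyk.induct) (auto intro: polyk.intros)

lemma polyk_const: "polyk k (\<lambda>x. c)"
proof -
  have "polyk k (mono_p (\<lambda>_. 0))" by (rule polyk.mono) simp
  then have "polyk k (\<lambda>x. c * mono_p (\<lambda>_. 0) x)" by (rule polyk.smult)
  then show ?thesis by (simp add: mono_p_def)
qed

lemma polyk_coord: "polyk 1 (\<lambda>x. x $ i)"
proof -
  have "polyk 1 (mono_p (\<lambda>j. if j = i then 1 else 0))" by (rule polyk.mono) simp
  moreover have "mono_p (\<lambda>j. if j = i then 1 else 0) = (\<lambda>x. x $ i)"
    by (rule ext) (simp add: mono_p_def if_distrib prod.delta cong: if_cong)
  ultimately show ?thesis by simp
qed

lemma polyk_sub: "polyk k f \<Longrightarrow> polyk k g \<Longrightarrow> polyk k (\<lambda>x. f x - g x)"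
  using polyk.add[of k f "\<lambda>x. (-1) * g x"] polyk.smult[of k g "-1"] by simp

lemma polyk_sum: "finite I \<Longrightarrow> (\<And>i. i \<in> I \<Longrightarrow> polyk k (f i)) \<Longrightarrow> polyk k (\<lambda>x. \<Sum>i\<in>I. f i x)"
  by (induction I rule: finite_induct) (auto intro: polyk.intros)

lemma mono_p_mult: "mono_p \<alpha> x * mono_p \<beta> x = mono_p (\<lambda>i. \<alpha> i + \<beta> i) x"
  by (simp add: mono_p_def power_add prod.distrib)

lemma polyk_mult: "polyk k f \<Longrightarrow> polyk m g \<Longrightarrow> polyk (k + m) (\<lambda>x. f x * g x)"
proof (induction arbitrary: g rule: polyk.induct)
  case (mono \<alpha> k)
  note ha = mono.hyps
  from mono.prems show ?case
  proof (induction rule: polyk.induct)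
    case (mono \<beta> m)
    have "polyk (k + m) (mono_p (\<lambda>i. \<alpha> i + \<beta> i))"
      by (rule polyk.mono) (use ha mono.hyps in \<open>simp add: sum.distrib\<close>)
    then show ?case by (simp add: mono_p_mult)
  next
    case (zero m) then show ?case by (simp add: polyk.zero)
  next
    case (add m f g) then show ?case using polyk.add[of "k+m"] by (simp add: distrib_left)
  next
    case (smult m f c) then show ?case using polyk.smult[of "k+m" _ c] by (simp add: algebra_simps)
  qed
next
  case (zero k) then show ?case by (simp add: polyk.zero)
next
  case (add k f1 f2)
  have "polyk (k + m) (\<lambda>x. f1 x * g x + f2 x * g x)"
    by (rule polyk.add) (use add in auto)
  then show ?case by (simp add: distrib_right)
next
  case (smult k f c)
  have "polyk (k + m) (\<lambda>x. c * (f x * g x))"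
    by (rule polyk.smult) (use smult in auto)
  then show ?case by (simp add: algebra_simps)
qed

lemma polyk_prod: "finite I \<Longrightarrow> (\<And>i. i \<in> I \<Longrightarrow> polyk k (f i)) \<Longrightarrow> polyk (k * card I) (\<lambda>x. \<Prod>i\<in>I. f i x)"
proof (induction I rule: finite_induct)
  case empty then show ?case using polyk_const[of 0 1] by simp
next
  case (insert i I)
  then have "polyk (k + k * card I) (\<lambda>x. f i x * (\<Prod>i\<in>I. f i x))"
    by (intro polyk_mult) auto
  then show ?case using insert by simp
qed

lemma polyk_diff: "polyk k f \<Longrightarrow> f differentiable (at y)"
proof (induction rule: polyk.induct)
  case (mono \<alpha> k) then show ?case using mono_p_deriv differentiable_def by blast
qed (auto intro!: differentiable_add differentiable_mult differentiable_const)

lemma mult_cont_deriv: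
  fixes k :: "real \<Rightarrow> real"
  assumes "isCont k 0"
  shows "((\<lambda>t. t * k t) has_derivative (\<lambda>h. h * k 0)) (at 0)"
proof -
  have "DERIV (\<lambda>t. t * k t) 0 :> k 0"
    by (subst CARAT_DERIV) (rule exI[of _ k], use assms in auto)
  then show ?thesis unfolding has_field_derivative_def
    by (rule has_derivative_eq_rhs) (auto simp: mult.commute)
qed

locale smooth =
  fixes \<phi> :: "'n::{finite,wellorder} rv \<Rightarrow> 'n rv" and f' :: "'n rv \<Rightarrow> ('n rv \<Rightarrow>\<^sub>L 'n rv)"
    and f'' :: "'n rv \<Rightarrow> ('n rv \<Rightarrow>\<^sub>L ('n rv \<Rightarrow>\<^sub>L 'n rv))" and x1 v1 :: "'n rv"
  assumes d1: "\<And>x. (\<phi> has_derivative blinfun_apply (f' x)) (at x)"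
    and d2: "\<And>x. (f' has_derivative blinfun_apply (f'' x)) (at x)"
begin

definition ft :: "real \<Rightarrow> ('n rv \<Rightarrow> real) \<Rightarrow> 'n rv \<Rightarrow> 'n rv" where
  "ft t g x = \<phi> x + (t * g x) *\<^sub>R e1"

definition DF :: "real \<Rightarrow> ('n rv \<Rightarrow> 'n rv \<Rightarrow> real) \<Rightarrow> 'n rv \<Rightarrow> 'n rv \<Rightarrow> 'n rv" where
  "DF t g' y v = f' y v + (t * g' y v) *\<^sub>R e1"

definition yt :: "real \<Rightarrow> ('n rv \<Rightarrow> real) \<Rightarrow> nat \<Rightarrow> 'n rv" where
  "yt t g i = (ft t g ^^ i) x1"

fun Lt :: "real \<Rightarrow> ('n rv \<Rightarrow> real) \<Rightarrow> ('n rv \<Rightarrow> 'n rv \<Rightarrow> real) \<Rightarrow> nat \<Rightarrow> 'n rv \<Rightarrow> 'n rv" where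
  "Lt t g g' 0 = id"
| "Lt t g g' (Suc i) = DF t g' (yt t g i) \<circ> Lt t g g' i"

abbreviation ys :: "nat \<Rightarrow> 'n rv" where "ys i \<equiv> (\<phi> ^^ i) x1"

fun W0 :: "nat \<Rightarrow> 'n rv" where
  "W0 0 = v1"
| "W0 (Suc i) = f' (ys i) (W0 i)"

fun Yd :: "('n rv \<Rightarrow> real) \<Rightarrow> nat \<Rightarrow> 'n rv" where
  "Yd g 0 = 0"
| "Yd g (Suc i) = f' (ys i) (Yd g i) + g (ys i) *\<^sub>R e1"

fun Wd :: "('n rv \<Rightarrow> real) \<Rightarrow> ('n rv \<Rightarrow> 'n rv \<Rightarrow> real) \<Rightarrow> nat \<Rightarrow> 'n rv" where
  "Wd g g' 0 = 0"
| "Wd g g' (Suc i) = f'' (ys i) (Yd g i) (W0 i) + (g' (ys i) (W0 i)) *\<^sub>R e1 + f' (ys i) (Wd g g' i)"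

lemma ft_deriv:
  assumes "(g has_derivative g' y) (at y)"
  shows "(ft t g has_derivative DF t g' y) (at y)"
  unfolding ft_def[abs_def] DF_def[abs_def]
  by (rule has_derivative_eq_rhs, (rule derivative_intros d1 assms)+) auto

lemma Lt_deriv:
  assumes "\<And>y. (g has_derivative g' y) (at y)"
  shows "((ft t g ^^ i) has_derivative Lt t g g' i) (at x1)"
proof (induction i)
  case 0 then show ?case by (simp add: id_def)
next
  case (Suc i)
  have "((ft t g \<circ> (ft t g ^^ i)) has_derivative (DF t g' (yt t g i) \<circ> Lt t g g' i)) (at x1)"
    by (rule diff_chain_at[OF Suc]) (unfold yt_def, rule ft_deriv[OF assms])
  then show ?case by (simp only: funpow.simps Lt.simps)
qed

lemma yt_Suc: "yt t g (Suc i) = ft t g (yt t g i)"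
  by (simp add: yt_def)

lemma ft0: "ft 0 g = \<phi>"
  by (rule ext) (simp add: ft_def)

lemma yt0: "yt 0 g i = ys i"
  by (simp add: yt_def ft0)

lemma Lt0: "Lt 0 g g' i v1 = W0 i"
  by (induction i) (auto simp: DF_def yt0)

lemma t_deriv:
  assumes gd: "\<And>y. (g has_derivative g' y) (at y)"
    and gc: "continuous_on UNIV (\<lambda>p. g' (fst p) (snd p))"
  shows "((\<lambda>t. yt t g i) has_derivative (\<lambda>h. h *\<^sub>R Yd g i)) (at 0) \<and>
         ((\<lambda>t. Lt t g g' i v1) has_derivative (\<lambda>h. h *\<^sub>R Wd g g' i)) (at 0)"
proof (induction i)
  case 0
  then show ?case by (simp add: yt_def)
next
  case (Suc i)
  have Y: "((\<lambda>t. yt t g i) has_derivative (\<lambda>h. h *\<^sub>R Yd g i)) (at 0)"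
    and V: "((\<lambda>t. Lt t g g' i v1) has_derivative (\<lambda>h. h *\<^sub>R Wd g g' i)) (at 0)" using Suc by auto
  have A: "((\<lambda>t. \<phi> (yt t g i)) has_derivative (\<lambda>h. f' (ys i) (h *\<^sub>R Yd g i))) (at 0)"
    using has_derivative_compose[OF Y d1] by (simp add: yt0)
  have B: "((\<lambda>t. t * g (yt t g i)) has_derivative (\<lambda>h. 0 * g' (ys i) (h *\<^sub>R Yd g i) + h * g (ys i))) (at 0)"
    using has_derivative_mult[OF has_derivative_ident has_derivative_compose[OF Y gd]] by (simp add: yt0)
  have "((\<lambda>t. \<phi> (yt t g i) + (t * g (yt t g i)) *\<^sub>R e1) has_derivative
     (\<lambda>h. f' (ys i) (h *\<^sub>R Yd g i) + (0 * g' (ys i) (h *\<^sub>R Yd g i) + h * g (ys i)) *\<^sub>R e1)) (at 0)"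
    by (intro has_derivative_add A has_derivative_scaleR_left B)
  then have Y': "((\<lambda>t. yt t g (Suc i)) has_derivative (\<lambda>h. h *\<^sub>R Yd g (Suc i))) (at 0)"
    unfolding yt_Suc ft_def
    by (rule has_derivative_eq_rhs) (auto simp: blinfun.scaleR_right scaleR_add_right)
  have cY: "isCont (\<lambda>t. yt t g i) 0" using has_derivative_continuous[OF Y] by simp
  have cV: "isCont (\<lambda>t. Lt t g g' i v1) 0" using has_derivative_continuous[OF V] by simp
  have cg: "isCont (\<lambda>p. g' (fst p) (snd p)) q" for q
    using gc continuous_on_eq_continuous_at[of UNIV] by auto
  have ck: "isCont (\<lambda>t. g' (yt t g i) (Lt t g g' i v1)) 0"
    using isCont_o2[OF continuous_Pair[OF cY cV] cg] by simp
  have C: "((\<lambda>t. f' (yt t g i) (Lt t g g' i v1)) has_derivative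
      (\<lambda>h. f' (yt 0 g i) (h *\<^sub>R Wd g g' i) + f'' (yt 0 g i) (h *\<^sub>R Yd g i) (Lt 0 g g' i v1))) (at 0)"
    by (rule blinfun.FDERIV[OF has_derivative_compose[OF Y d2] V])
  have "((\<lambda>t. f' (yt t g i) (Lt t g g' i v1) + (t * g' (yt t g i) (Lt t g g' i v1)) *\<^sub>R e1) has_derivative
      (\<lambda>h. f' (yt 0 g i) (h *\<^sub>R Wd g g' i) + f'' (yt 0 g i) (h *\<^sub>R Yd g i) (Lt 0 g g' i v1)
        + (h * g' (yt 0 g i) (Lt 0 g g' i v1)) *\<^sub>R e1)) (at 0)"
    by (intro has_derivative_add C has_derivative_scaleR_left mult_cont_deriv ck)
  moreover have "(\<lambda>t. Lt t g g' (Suc i) v1) = (\<lambda>t. f' (yt t g i) (Lt t g g' i v1) + (t * g' (yt t g i) (Lt t g g' i v1)) *\<^sub>R e1)"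
    by (simp add: DF_def)
  ultimately have V': "((\<lambda>t. Lt t g g' (Suc i) v1) has_derivative (\<lambda>h. h *\<^sub>R Wd g g' (Suc i))) (at 0)"
    apply simp by (rule has_derivative_eq_rhs) (auto simp: DF_def yt0 Lt0 blinfun.scaleR_right blinfun.scaleR_left scaleR_add_right add_ac)
  show ?case using Y' V' by simp
qed

end

lemma pi1_simps[simp]: "pi1 (x + y) = pi1 x + pi1 y" "pi1 (c *\<^sub>R x) = c * pi1 x" "pi1 0 = 0"
  "pi1 (e1 :: 'n::{finite,wellorder} rv) = 1"
  by (auto simp: pi1_def e1_def)

lemma fd_add:
  assumes "\<And>y. g1 differentiable (at y)" "\<And>y. g2 differentiable (at y)"
  shows "(\<lambda>y. frechet_derivative (\<lambda>x. g1 x + g2 x) (at y)) =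
    (\<lambda>y v. frechet_derivative g1 (at y) v + frechet_derivative g2 (at y) v)"
proof (rule ext)
  fix y
  have "((\<lambda>x. g1 x + g2 x) has_derivative (\<lambda>v. frechet_derivative g1 (at y) v + frechet_derivative g2 (at y) v)) (at y)"
    using assms frechet_derivative_works by (blast intro: has_derivative_add)
  then show "frechet_derivative (\<lambda>x. g1 x + g2 x) (at y) = (\<lambda>v. frechet_derivative g1 (at y) v + frechet_derivative g2 (at y) v)"
    by (rule frechet_derivative_at[symmetric])
qed

lemma fd_smult:
  fixes g :: "'a::real_normed_vector \<Rightarrow> real"
  assumes "\<And>y. g differentiable (at y)"
  shows "(\<lambda>y. frechet_derivative (\<lambda>x. c * g x) (at y)) =
    (\<lambda>y v. c * frechet_derivative g (at y) v)"
proof (rule ext)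
  fix y
  have "((\<lambda>x. c * g x) has_derivative (\<lambda>v. c * frechet_derivative g (at y) v)) (at y)"
    using assms frechet_derivative_works by (blast intro: has_derivative_mult_right)
  then show "frechet_derivative (\<lambda>x. c * g x) (at y) = (\<lambda>v. c * frechet_derivative g (at y) v)"
    by (rule frechet_derivative_at[symmetric])
qed

lemma fd_zero: "(\<lambda>y. frechet_derivative (\<lambda>x. 0::real) (at y)) = (\<lambda>y v. 0)"
  by (rule ext, rule frechet_derivative_at[symmetric]) simp

lemma fd_mono: "(\<lambda>y. frechet_derivative (mono_p \<alpha>) (at y)) = mono_d \<alpha>"
  by (rule ext, rule frechet_derivative_at[symmetric], rule mono_p_deriv)

context smooth begin

lemma Yd_add: "Yd (\<lambda>x. g1 x + g2 x) i = Yd g1 i + Yd g2 i"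
  by (induction i) (auto simp: blinfun.add_right scaleR_add_left)

lemma Yd_smult: "Yd (\<lambda>x. c * g x) i = c *\<^sub>R Yd g i"
  by (induction i) (auto simp: blinfun.scaleR_right scaleR_add_right)

lemma Yd_zero: "Yd (\<lambda>x. 0) i = 0"
  by (induction i) auto

lemma Wd_add: "Wd (\<lambda>x. g1 x + g2 x) (\<lambda>y v. g1' y v + g2' y v) i = Wd g1 g1' i + Wd g2 g2' i"
  by (induction i) (auto simp: Yd_add blinfun.add_right blinfun.add_left scaleR_add_left algebra_simps)

lemma Wd_smult: "Wd (\<lambda>x. c * g x) (\<lambda>y v. c * g' y v) i = c *\<^sub>R Wd g g' i"
  by (induction i) (auto simp: Yd_smult blinfun.scaleR_right blinfun.scaleR_left scaleR_add_right)

lemma Wd_zero: "Wd (\<lambda>x. 0) (\<lambda>y v. 0) i = 0"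
  by (induction i) (auto simp: Yd_zero)

lemma vanish:
  assumes "\<forall>i<m. g (ys i) = 0 \<and> (\<forall>v. g' (ys i) v = 0)"
  shows "i \<le> m \<Longrightarrow> Yd g i = 0 \<and> Wd g g' i = 0"
  using assms by (induction i) auto

lemma W0_nz:
  assumes "\<And>y. inj (blinfun_apply (f' y))" "v1 \<noteq> 0"
  shows "W0 i \<noteq> 0"
proof (induction i)
  case 0 then show ?case using assms by simp
next
  case (Suc i)
  show ?case
  proof
    assume "W0 (Suc i) = 0"
    then have "f' (ys i) (W0 i) = f' (ys i) 0" by simp
    then have "W0 i = 0" using assms(1) by (meson injD)
    then show False using Suc by simp
  qed
qed

lemma H_link:
  assumes "\<alpha> \<in> multi_idx D"
  shows "H_entry D \<phi> x1 v1 j \<alpha> = pi1 (Wd (mono_p \<alpha>) (mono_d \<alpha>) j)"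
proof -
  have pc: "phi_c D \<phi> (\<lambda>\<beta>. if \<beta> = \<alpha> then t else 0) = ft t (mono_p \<alpha>)" for t
  proof (rule ext)
    fix x
    have "(\<Sum>\<beta>\<in>multi_idx D. (if \<beta> = \<alpha> then t else 0) * mono_p \<beta> x) =
        (\<Sum>\<beta>\<in>multi_idx D. if \<beta> = \<alpha> then t * mono_p \<beta> x else 0)"
      by (rule sum.cong) auto
    also have "\<dots> = t * mono_p \<alpha> x" using assms by (simp add: sum.delta[OF finite_multi_idx])
    finally show "phi_c D \<phi> (\<lambda>\<beta>. if \<beta> = \<alpha> then t else 0) x = ft t (mono_p \<alpha>) x"
      by (simp add: phi_c_def ft_def)
  qed
  have fd: "frechet_derivative (ft t (mono_p \<alpha>) ^^ j) (at x1) = Lt t (mono_p \<alpha>) (mono_d \<alpha>) j" for t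
    by (rule frechet_derivative_at[symmetric], rule Lt_deriv, rule mono_p_deriv)
  have "((\<lambda>t. Lt t (mono_p \<alpha>) (mono_d \<alpha>) j v1) has_derivative (\<lambda>h. h *\<^sub>R Wd (mono_p \<alpha>) (mono_d \<alpha>) j)) (at 0)"
    using t_deriv[OF mono_p_deriv mono_d_cont] by blast
  from bounded_linear.has_derivative[OF bounded_linear_vec_nth this, of first_idx]
  have "DERIV (\<lambda>t. pi1 (Lt t (mono_p \<alpha>) (mono_d \<alpha>) j v1)) 0 :> pi1 (Wd (mono_p \<alpha>) (mono_d \<alpha>) j)"
    unfolding has_field_derivative_def pi1_def
    by (rule has_derivative_eq_rhs) (auto simp: mult.commute)
  then show ?thesis unfolding H_entry_def pc fd by (rule DERIV_imp_deriv)
qed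

definition Lam :: "('n rv \<Rightarrow> real) \<Rightarrow> nat \<Rightarrow> real" where
  "Lam g j = pi1 (Wd g (\<lambda>y. frechet_derivative g (at y)) j)"

lemma poly_comb:
  assumes "polyk k g" "k \<le> 2 * D - 1"
    and "\<forall>\<alpha>\<in>multi_idx D. (\<Sum>j\<in>R. a j * pi1 (Wd (mono_p \<alpha>) (mono_d \<alpha>) j)) = 0"
  shows "(\<Sum>j\<in>R. a j * Lam g j) = 0"
  using assms(1,2)
proof (induction rule: polyk.induct)
  case (mono \<alpha> k)
  then have "\<alpha> \<in> multi_idx D" by (simp add: multi_idx_def)
  then show ?case using assms(3) by (simp add: Lam_def fd_mono)
next
  case (zero k) then show ?case by (simp add: Lam_def fd_zero Wd_zero)
next
  case (add k f g)
  have "(\<Sum>j\<in>R. a j * Lam (\<lambda>x. f x + g x) j) = (\<Sum>j\<in>R. a j * Lam f j) + (\<Sum>j\<in>R. a j * Lam g j)"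
    by (simp add: Lam_def fd_add polyk_diff[OF add.hyps(1)] polyk_diff[OF add.hyps(2)] Wd_add
        sum.distrib[symmetric] distrib_left)
  then show ?case using add by simp
next
  case (smult k f c)
  have "(\<Sum>j\<in>R. a j * Lam (\<lambda>x. c * f x) j) = c * (\<Sum>j\<in>R. a j * Lam f j)"
    by (simp add: Lam_def fd_smult polyk_diff[OF smult.hyps(1)] Wd_smult sum_distrib_left algebra_simps)
  then show ?case using smult by simp
qed

end

lemma VL:
  fixes a b :: "'a::real_normed_vector \<Rightarrow> real"
  assumes "(b has_derivative (\<lambda>v. 0)) (at y)" "b y = 0" "a differentiable (at y)"
  shows "((\<lambda>x. a x * b x) has_derivative (\<lambda>v. 0)) (at y)"
proof -
  from assms(3) obtain a' where a': "(a has_derivative a') (at y)" by (auto simp: differentiable_def)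
  show ?thesis using has_derivative_mult[OF a' assms(1)] assms(2) by simp
qed

lemma VL2:
  fixes a b :: "'a::real_normed_vector \<Rightarrow> real"
  assumes "(b has_derivative (\<lambda>v. 0)) (at y)" "b y = 0" "a differentiable (at y)"
  shows "((\<lambda>x. b x * a x) has_derivative (\<lambda>v. 0)) (at y)"
  using VL[OF assms] by (simp add: mult.commute)

lemma q_deriv0: "((\<lambda>x. (x - c) \<bullet> (x - c)) has_derivative (\<lambda>v. 0)) (at (c::'a::real_inner))"
  by (rule has_derivative_eq_rhs, (rule derivative_intros)+) auto

lemma lin_deriv: "((\<lambda>x. w \<bullet> (x - c)) has_derivative (\<lambda>v. w \<bullet> v)) (at (y::'a::real_inner))"
  by (rule has_derivative_eq_rhs, (rule derivative_intros)+) auto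

lemma polyk_lin: "polyk 1 (\<lambda>x::'n::finite rv. w \<bullet> (x - c))"
proof -
  have "polyk 1 (\<lambda>x::'n rv. \<Sum>k\<in>UNIV. w $ k * (x $ k - c $ k))"
    by (intro polyk_sum polyk.smult polyk_sub polyk_coord polyk_const) auto
  then show ?thesis by (simp add: inner_vec_def)
qed

lemma polyk_q: "polyk 2 (\<lambda>x::'n::finite rv. (x - c) \<bullet> (x - c))"
proof -
  have "polyk 2 (\<lambda>x::'n rv. (x $ k - c $ k) * (x $ k - c $ k))" for k
    using polyk_mult[OF polyk_sub[OF polyk_coord[of k] polyk_const[of 1 "c $ k"]]
        polyk_sub[OF polyk_coord[of k] polyk_const[of 1 "c $ k"]]] by (simp add: numeral_2_eq_2)
  then have "polyk 2 (\<lambda>x::'n rv. \<Sum>k\<in>UNIV. (x $ k - c $ k) * (x $ k - c $ k))"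
    by (intro polyk_sum) auto
  then show ?thesis by (simp add: inner_vec_def)
qed

theorem lemma12:
  fixes \<phi> :: "(real, 'n::{finite,wellorder}) vec \<Rightarrow> (real, 'n) vec"
    and x1 v1 :: "(real, 'n) vec" and D :: nat
  assumes "C2_diffeo \<phi>"
    and "norm v1 = 1"
    and "inj_on (\<lambda>j. (\<phi> ^^ (j - 1)) x1) {1..D-1}"
  shows "full_row_rank {1..D-1} (multi_idx D) (H_entry D \<phi> x1 v1)"
proof -
  from assms(1) have bij: "bij \<phi>" and c1: "C2 \<phi>" and c2: "C2 (inv \<phi>)"
    unfolding C2_diffeo_def by auto
  obtain f' f'' where d1: "\<forall>x. (\<phi> has_derivative blinfun_apply (f' x)) (at x)"
    and d2: "\<forall>x. (f' has_derivative blinfun_apply (f'' x)) (at x)"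
    using c1 unfolding C2_def by blast
  obtain gi where gi: "\<forall>x. (inv \<phi> has_derivative blinfun_apply (gi x)) (at x)"
    using c2 unfolding C2_def by blast
  interpret S: smooth \<phi> f' f'' x1 v1 using d1 d2 by unfold_locales auto
  have injf: "inj (blinfun_apply (f' y))" for y
  proof -
    have "((inv \<phi> \<circ> \<phi>) has_derivative (blinfun_apply (gi (\<phi> y)) \<circ> blinfun_apply (f' y))) (at y)"
      using diff_chain_at d1 gi by blast
    moreover have "inv \<phi> \<circ> \<phi> = id" using bij by (simp add: bij_is_inj)
    ultimately have "blinfun_apply (gi (\<phi> y)) \<circ> blinfun_apply (f' y) = id"
      using has_derivative_unique has_derivative_id by metis
    then show ?thesis by (metis inj_on_id inj_on_imageI2)
  qed
  have v1nz: "v1 \<noteq> 0" using assms(2) by auto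
  show ?thesis unfolding full_row_rank_def
  proof (intro allI impI ballI)
    fix a j
    assume h: "\<forall>\<alpha>\<in>multi_idx D. (\<Sum>j\<in>{1..D-1}. a j * H_entry D \<phi> x1 v1 j \<alpha>) = 0"
      and jR: "j \<in> {1..D-1}"
    show "a j = 0"
    proof (rule ccontr)
      assume aj: "a j \<noteq> 0"
      define Sx where "Sx = {j \<in> {1..D-1}. a j \<noteq> 0}"
      have fS: "finite Sx" and neS: "Sx \<noteq> {}" using aj jR by (auto simp: Sx_def)
      define J where "J = Max Sx"
      have JS: "J \<in> Sx" unfolding J_def using fS neS by (rule Max_in)
      have Jmax: "k \<le> J" if "k \<in> {1..D-1}" "a k \<noteq> 0" for k
        unfolding J_def using fS that by (auto simp: Sx_def intro: Max_ge)
      define m where "m = J - 1"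
      have Jm: "J = Suc m" and mD: "m + 1 \<le> D - 1" and aJ: "a J \<noteq> 0" and JR: "J \<in> {1..D-1}"
        using JS by (auto simp: Sx_def m_def)
      define W where "W = S.W0 m"
      define q where "q = (\<lambda>i x. (x - S.ys i) \<bullet> (x - S.ys i))"
      define b where "b = (\<lambda>x. \<Prod>i<m. q i x)"
      define lin where "lin = (\<lambda>x. W \<bullet> (x - S.ys m))"
      define g where "g = (\<lambda>x. lin x * b x)"
      have h2: "\<forall>\<alpha>\<in>multi_idx D. (\<Sum>j\<in>{1..D-1}. a j * pi1 (S.Wd (mono_p \<alpha>) (mono_d \<alpha>) j)) = 0"
        using h S.H_link by simp
      have pl: "polyk 1 lin" unfolding lin_def by (rule polyk_lin)
      have pb: "polyk (2 * card {..<m}) b" unfolding b_def q_def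
        by (rule polyk_prod) (auto intro: polyk_q)
      have "polyk (1 + 2 * m) g" unfolding g_def using polyk_mult[OF pl pb] by simp
      then have pg: "polyk (2 * D - 1) g" by (rule polyk_mono) (use mD in auto)
      have sum0: "(\<Sum>j\<in>{1..D-1}. a j * S.Lam g j) = 0"
        by (rule S.poly_comb[OF pg order_refl h2])
      have dist: "S.ys i \<noteq> S.ys m" if "i < m" for i
        using inj_onD[OF assms(3), of "i+1" "m+1"] that mD by auto
      have bdiff: "b differentiable (at y)" for y using polyk_diff[OF pb] .
      have ldiff: "lin differentiable (at y)" for y using polyk_diff[OF pl] .
      have van: "\<forall>i<m. g (S.ys i) = 0 \<and> (\<forall>v. frechet_derivative g (at (S.ys i)) v = 0)"
      proof (intro allI impI)
        fix i assume im: "i < m"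
        have bsplit: "b = (\<lambda>x. q i x * (\<Prod>k\<in>{..<m}-{i}. q k x))"
          unfolding b_def using im by (intro ext) (simp add: prod.remove)
        have pr: "polyk (2 * card ({..<m}-{i})) (\<lambda>x. \<Prod>k\<in>{..<m}-{i}. q k x)"
          unfolding q_def by (rule polyk_prod) (auto intro: polyk_q)
        have q0: "q i (S.ys i) = 0" by (simp add: q_def)
        have "(q i has_derivative (\<lambda>v. 0)) (at (S.ys i))" unfolding q_def by (rule q_deriv0)
        then have "(b has_derivative (\<lambda>v. 0)) (at (S.ys i))"
          unfolding bsplit by (rule VL2[where b="q i" and y="S.ys i", OF _ q0 polyk_diff[OF pr]])
        moreover have b0: "b (S.ys i) = 0" unfolding bsplit using q0 by simp
        ultimately have "(g has_derivative (\<lambda>v. 0)) (at (S.ys i))"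
          unfolding g_def by (rule VL[OF _ _ ldiff])
        then have "frechet_derivative g (at (S.ys i)) = (\<lambda>v. 0)"
          by (rule frechet_derivative_at[symmetric])
        then show "g (S.ys i) = 0 \<and> (\<forall>v. frechet_derivative g (at (S.ys i)) v = 0)"
          using b0 by (simp add: g_def)
      qed
      have Lam_low: "S.Lam g k = 0" if "k \<le> m" for k
        using S.vanish[OF van that] by (simp add: S.Lam_def)
      have "((\<lambda>x. lin x * b x) has_derivative
          (\<lambda>v. lin (S.ys m) * frechet_derivative b (at (S.ys m)) v + (W \<bullet> v) * b (S.ys m))) (at (S.ys m))"
        unfolding lin_def
        by (rule has_derivative_mult[OF lin_deriv]) (use bdiff frechet_derivative_works in blast)
      then have "frechet_derivative g (at (S.ys m)) = (\<lambda>v. lin (S.ys m) * frechet_derivative b (at (S.ys m)) v + (W \<bullet> v) * b (S.ys m))"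
        unfolding g_def by (rule frechet_derivative_at[symmetric])
      then have fdm: "frechet_derivative g (at (S.ys m)) W = (W \<bullet> W) * b (S.ys m)"
        by (simp add: lin_def)
      have LamJ: "S.Lam g J = (W \<bullet> W) * b (S.ys m)"
        using S.vanish[OF van order_refl] fdm by (simp add: S.Lam_def Jm W_def)
      have Wnz: "W \<noteq> 0" unfolding W_def by (rule S.W0_nz[OF injf v1nz])
      have qpos: "q i (S.ys m) > 0" if "i < m" for i using dist[OF that] by (simp add: q_def)
      have bpos: "b (S.ys m) > 0" unfolding b_def
        by (rule prod_pos) (use qpos in auto)
      have pos: "S.Lam g J \<noteq> 0" using LamJ Wnz bpos by simp
      have "(\<Sum>j\<in>{1..D-1}. a j * S.Lam g j) = (\<Sum>j\<in>{1..D-1}. if j = J then a J * S.Lam g J else 0)"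
      proof (rule sum.cong)
        fix k assume k: "k \<in> {1..D-1}"
        show "a k * S.Lam g k = (if k = J then a J * S.Lam g J else 0)"
        proof (cases "k = J")
          case False
          show ?thesis
          proof (cases "a k = 0")
            case False
            then have "k \<le> m" using Jmax[OF k] \<open>k \<noteq> J\<close> Jm by auto
            then show ?thesis using Lam_low \<open>k \<noteq> J\<close> by simp
          qed (use False in simp)
        qed simp
      qed simp
      also have "\<dots> = a J * S.Lam g J" using JR by simp
      finally show False using sum0 aJ pos by simp
    qed
  qed
qed

end
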